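(* Let $\mathbf{X}$ be a finitely supported real random variable with $\mathbf{E}[\mathbf{X}]=0$ and $\mathrm{Var}[\mathbf{X}]=1$. Let $q(x)$ be a multilinear polynomial over $\mathbb{R}^n$ of degree at most $d$ with $\mathrm{sparsity}(q)=T$. Then for $\mathbf{x}\sim\mathbf{X}^{\otimes n}$, the random variable $q(\mathbf{x})$ takes at least $\frac{1}{2d^2}\log(T)-3$ distinct output values.
   Context: A multilinear polynomial of degree at most $d$ is $q(x)=\sum_{|S|\le d}\widehat{q}(S)\prod_{i\in S}x_i$; $\mathrm{sparsity}(q)$ is its number of nonzero coefficients. $\log$ denotes the logarithm to base $2$. $\mathbf{X}^{\otimes n}$ is a vector of $n$ i.i.d. copies of $\mathbf{X}$. *)

theory Defs
  imports "HOL-Probability.Probability"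
begin

(* A multilinear polynomial over R^n (variables x_0..x_{n-1}) is represented by its
   coefficient function c :: nat set => real, c S = \<hat>q(S). *)
definition is_multilinear_poly :: "nat \<Rightarrow> nat \<Rightarrow> (nat set \<Rightarrow> real) \<Rightarrow> bool" where
  "is_multilinear_poly n d c \<longleftrightarrow> (\<forall>S. c S \<noteq> 0 \<longrightarrow> S \<subseteq> {..<n} \<and> card S \<le> d)"

definition mpoly_eval :: "nat \<Rightarrow> (nat set \<Rightarrow> real) \<Rightarrow> (nat \<Rightarrow> real) \<Rightarrow> real" where
  "mpoly_eval n c x = (\<Sum>S\<in>Pow {..<n}. c S * (\<Prod>i\<in>S. x i))"

definition sparsity :: "(nat set \<Rightarrow> real) \<Rightarrow> nat" where
  "sparsity c = card {S. c S \<noteq> 0}"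

end

theory Submission
  imports Defs
begin

definition flip :: "nat \<Rightarrow> nat set \<Rightarrow> nat set" where
  "flip j U = (if j \<in> U then U - {j} else insert j U)"

lemma flip_flip[simp]: "flip j (flip j U) = U"
  by (auto simp: flip_def)

lemma flip_Pow: "j \<in> N \<Longrightarrow> U \<subseteq> N \<Longrightarrow> flip j U \<subseteq> N"
  by (auto simp: flip_def)

lemma sum_flip:
  assumes "j \<in> N"
  shows "(\<Sum>U\<in>Pow N. f (flip j U)) = (\<Sum>U\<in>Pow N. (f U :: real))"
  by (rule sum.reindex_bij_witness[where i="flip j" and j="flip j"])
     (use assms in \<open>auto simp: flip_def\<close>)

lemma sum_flip_zero:
  assumes "j \<in> N" "\<And>U. U \<subseteq> N \<Longrightarrow> f (flip j U) = - f U"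
  shows "(\<Sum>U\<in>Pow N. (f U :: real)) = 0"
proof -
  have "(\<Sum>U\<in>Pow N. f U) = (\<Sum>U\<in>Pow N. f (flip j U))" using sum_flip[OF assms(1)] by simp
  also have "\<dots> = - (\<Sum>U\<in>Pow N. f U)" using assms(2) by (simp add: sum_negf)
  finally show ?thesis by simp
qed

definition chi :: "nat set \<Rightarrow> nat set \<Rightarrow> real" where
  "chi S U = (-1) ^ card (S \<inter> U)"

lemma chi_sym: "chi S U = chi U S"
  by (simp add: chi_def Int_commute)

lemma chi_sq: "chi S U * chi S U = 1"
  by (simp add: chi_def flip: power_add) 

lemma chi_flip:
  assumes "finite U"
  shows "chi (flip j S) U = (if j \<in> U then - chi S U else chi S U)"
proof (cases "j \<in> U")
  case True
  show ?thesis
  proof (cases "j \<in> S")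
    case True
    have "card (S \<inter> U) = Suc (card ((S - {j}) \<inter> U))"
    proof -
      have "S \<inter> U = insert j ((S - {j}) \<inter> U)" using True \<open>j \<in> U\<close> by auto
      then show ?thesis using assms by (simp add: card_insert_if)
    qed
    then show ?thesis using True \<open>j \<in> U\<close> by (simp add: chi_def flip_def)
  next
    case False
    have "insert j S \<inter> U = insert j (S \<inter> U)" using \<open>j \<in> U\<close> by auto
    then show ?thesis using False \<open>j \<in> U\<close> assms by (simp add: chi_def flip_def card_insert_if)
  qed
next
  case False
  then have "flip j S \<inter> U = S \<inter> U" by (auto simp: flip_def)
  then show ?thesis using False by (simp add: chi_def)
qed

lemma chi_orth:
  assumes "finite N" "U \<subseteq> N" "W \<subseteq> N"
  shows "(\<Sum>S\<in>Pow N. chi S U * chi S W) = (if U = W then 2 ^ card N else 0)"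
proof (cases "U = W")
  case True
  then show ?thesis using assms by (simp add: chi_sq card_Pow)
next
  case False
  then obtain j where j: "j \<in> N" "(j \<in> U) \<noteq> (j \<in> W)" using assms by blast
  have fU: "finite U" "finite W" using assms finite_subset by auto
  have "(\<Sum>S\<in>Pow N. chi S U * chi S W) = 0"
    by (rule sum_flip_zero[OF j(1)]) (use j fU in \<open>auto simp: chi_flip\<close>)
  then show ?thesis using False by simp
qed

definition fc :: "nat set \<Rightarrow> (nat set \<Rightarrow> real) \<Rightarrow> nat set \<Rightarrow> real" where
  "fc N G S = (\<Sum>U\<in>Pow N. G U * chi S U)"

lemma parseval:
  assumes "finite N"
  shows "(\<Sum>S\<in>Pow N. (fc N G S)^2) = 2 ^ card N * (\<Sum>U\<in>Pow N. (G U)^2)"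
proof -
  have "(\<Sum>S\<in>Pow N. (fc N G S)^2) = (\<Sum>S\<in>Pow N. \<Sum>U\<in>Pow N. \<Sum>W\<in>Pow N. G U * chi S U * (G W * chi S W))"
    unfolding fc_def power2_eq_square by (intro sum.cong refl) (rule sum_product)
  also have "\<dots> = (\<Sum>U\<in>Pow N. \<Sum>S\<in>Pow N. \<Sum>W\<in>Pow N. G U * chi S U * (G W * chi S W))"
    by (rule sum.swap)
  also have "\<dots> = (\<Sum>U\<in>Pow N. \<Sum>W\<in>Pow N. \<Sum>S\<in>Pow N. G U * chi S U * (G W * chi S W))"
    by (intro sum.cong refl sum.swap)
  also have "\<dots> = (\<Sum>U\<in>Pow N. \<Sum>W\<in>Pow N. G U * G W * (\<Sum>S\<in>Pow N. chi S U * chi S W))"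
    by (intro sum.cong refl) (simp add: sum_distrib_left mult_ac)
  also have "\<dots> = (\<Sum>U\<in>Pow N. \<Sum>W\<in>Pow N. G U * G W * (if U = W then 2 ^ card N else 0))"
    by (intro sum.cong refl) (simp add: chi_orth assms)
  also have "\<dots> = (\<Sum>U\<in>Pow N. G U * G U * 2 ^ card N)"
  proof (intro sum.cong refl)
    fix U assume "U \<in> Pow N"
    have "(\<Sum>W\<in>Pow N. G U * G W * (if U = W then 2 ^ card N else 0)) = (\<Sum>W\<in>Pow N. (if U = W then G U * G W * 2 ^ card N else 0))"
      by (intro sum.cong refl) simp
    also have "\<dots> = G U * G U * 2 ^ card N" using \<open>U \<in> Pow N\<close> assms by (simp add: sum.delta)
    finally show "(\<Sum>W\<in>Pow N. G U * G W * (if U = W then 2 ^ card N else 0)) = G U * G U * 2 ^ card N" .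
  qed
  also have "\<dots> = 2 ^ card N * (\<Sum>U\<in>Pow N. (G U)^2)"
    by (simp add: sum_distrib_left power2_eq_square mult_ac)
  finally show ?thesis .
qed

lemma chi_ins_notin: "i \<notin> S \<Longrightarrow> chi S (insert i U) = chi S U"
  by (simp add: chi_def)
lemma chi_minus_notin: "i \<notin> S \<Longrightarrow> chi S (U - {i}) = chi S U"
proof -
  assume "i \<notin> S" then have "S \<inter> (U - {i}) = S \<inter> U" by auto
  then show ?thesis by (simp add: chi_def)
qed
lemma chi_insert_left: "finite W \<Longrightarrow> i \<notin> S \<Longrightarrow> chi (insert i S) W = (if i \<in> W then - chi S W else chi S W)"
  using chi_flip[of W i S] by (simp add: flip_def)

lemma fc_deriv:
  assumes "finite N" "i \<in> N" "S \<subseteq> N"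
  shows "fc N (\<lambda>U. G (insert i U) - G (U - {i})) S = (if i \<in> S then 0 else -2 * fc N G (insert i S))"
proof (cases "i \<in> S")
  case True
  have fS: "finite S" using assms finite_subset by auto
  have "(\<Sum>U\<in>Pow N. (G (insert i U) - G (U - {i})) * chi S U) = 0"
  proof (rule sum_flip_zero[OF assms(2)])
    fix U assume "U \<subseteq> N"
    have "insert i (flip i U) = insert i U" "flip i U - {i} = U - {i}" by (auto simp: flip_def)
    moreover have "chi S (flip i U) = - chi S U"
      using chi_flip[OF fS, of i U] True by (simp add: chi_sym)
    ultimately show "(G (insert i (flip i U)) - G (flip i U - {i})) * chi S (flip i U) = - ((G (insert i U) - G (U - {i})) * chi S U)"
      by simp
  qed
  then show ?thesis using True by (simp add: fc_def)
next
  case False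
  define phi where "phi W = G W * chi (insert i S) W" for W
  have "(\<Sum>U\<in>Pow N. (G (insert i U) - G (U - {i})) * chi S U) = (\<Sum>U\<in>Pow N. - (phi U + phi (flip i U)))"
  proof (intro sum.cong refl)
    fix U assume U: "U \<in> Pow N"
    then have fU: "finite U" using assms finite_subset by auto
    have e1: "phi (insert i U) = - G (insert i U) * chi S U"
      using fU False by (simp add: phi_def chi_insert_left chi_ins_notin)
    have e2: "phi (U - {i}) = G (U - {i}) * chi S U"
      using fU False by (simp add: phi_def chi_insert_left chi_minus_notin)
    have e3: "phi (insert i U) + phi (U - {i}) = phi U + phi (flip i U)"
      by (cases "i \<in> U") (auto simp: flip_def insert_absorb)
    show "(G (insert i U) - G (U - {i})) * chi S U = - (phi U + phi (flip i U))"
      using e1 e2 e3 by (simp add: algebra_simps)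
  qed
  also have "\<dots> = - (\<Sum>U\<in>Pow N. phi U) - (\<Sum>U\<in>Pow N. phi (flip i U))"
    by (simp add: sum_negf sum_subtractf)
  also have "\<dots> = -2 * (\<Sum>U\<in>Pow N. phi U)"
    using sum_flip[OF assms(2), of phi] by simp
  finally show ?thesis using False by (simp add: fc_def phi_def)
qed

definition Deg :: "nat set \<Rightarrow> nat \<Rightarrow> (nat set \<Rightarrow> real) \<Rightarrow> bool" where
  "Deg N D G \<longleftrightarrow> (\<exists>p. (\<forall>R. p R \<noteq> 0 \<longrightarrow> card R \<le> D) \<and>
      (\<forall>U\<in>Pow N. G U = (\<Sum>R\<in>Pow N. p R * (if R \<subseteq> U then 1 else 0))))"

lemma fc_Deg_zero:
  assumes "finite N" "Deg N D G" "S \<subseteq> N" "card S > D"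
  shows "fc N G S = 0"
proof -
  obtain p where p: "\<forall>R. p R \<noteq> 0 \<longrightarrow> card R \<le> D"
     "\<forall>U\<in>Pow N. G U = (\<Sum>R\<in>Pow N. p R * (if R \<subseteq> U then 1 else 0))"
    using assms(2) unfolding Deg_def by blast
  have "fc N G S = (\<Sum>U\<in>Pow N. \<Sum>R\<in>Pow N. p R * ((if R \<subseteq> U then 1 else 0) * chi S U))"
    unfolding fc_def using p(2) by (intro sum.cong refl) (simp add: sum_distrib_right sum_distrib_left mult_ac)
  also have "\<dots> = (\<Sum>R\<in>Pow N. p R * (\<Sum>U\<in>Pow N. (if R \<subseteq> U then 1 else 0) * chi S U))"
    by (subst sum.swap) (simp add: sum_distrib_left)
  also have "\<dots> = 0"
  proof (intro sum.neutral ballI)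
    fix R assume R: "R \<in> Pow N"
    show "p R * (\<Sum>U\<in>Pow N. (if R \<subseteq> U then 1 else 0) * chi S U) = 0"
    proof (cases "p R = 0")
      case False
      then have "card R < card S" using p(1) assms(4) by fastforce
      then have "\<not> S \<subseteq> R" using R assms(1) finite_subset card_mono
        by (metis PowD leD)
      then obtain j where j: "j \<in> S" "j \<notin> R" by blast
      have fS: "finite S" using assms finite_subset by auto
      have "(\<Sum>U\<in>Pow N. (if R \<subseteq> U then 1 else 0) * chi S U) = 0"
      proof (rule sum_flip_zero[of j])
        show "j \<in> N" using j assms(3) by auto
        fix U assume "U \<subseteq> N"
        have "(R \<subseteq> flip j U) = (R \<subseteq> U)" using j by (auto simp: flip_def)
        moreover have "chi S (flip j U) = - chi S U"
          using chi_flip[OF fS, of j U] j by (simp add: chi_sym)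
        ultimately show "(if R \<subseteq> flip j U then 1 else 0) * chi S (flip j U) = - ((if R \<subseteq> U then 1 else 0) * chi S U)"
          by simp
      qed
      then show ?thesis by simp
    qed simp
  qed
  finally show ?thesis .
qed

lemma deriv_energy:
  assumes "finite N" "i \<in> N"
  shows "(\<Sum>U\<in>Pow N. (G (insert i U) - G (U - {i}))^2)
          = 4 * (\<Sum>S\<in>Pow N. (if i \<in> S then (fc N G S)^2 else 0)) / 2 ^ card N"
proof -
  let ?H = "\<lambda>U. G (insert i U) - G (U - {i})"
  have "(\<Sum>U\<in>Pow N. (?H U)^2) = (\<Sum>S\<in>Pow N. (fc N ?H S)^2) / 2 ^ card N"
    using parseval[OF assms(1), of ?H] by simp
  also have "(\<Sum>S\<in>Pow N. (fc N ?H S)^2) = (\<Sum>S\<in>Pow N. 4 * (if i \<in> flip i S then (fc N G (flip i S))^2 else 0))"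
    using assms by (intro sum.cong refl) (auto simp: fc_deriv flip_def power2_eq_square)
  also have "\<dots> = 4 * (\<Sum>S\<in>Pow N. (if i \<in> S then (fc N G S)^2 else 0))"
    unfolding sum_distrib_left[symmetric]
    using sum_flip[OF assms(2), of "\<lambda>S. (if i \<in> S then (fc N G S)^2 else 0)"]
    by (simp only:)
  finally show ?thesis .
qed

lemma influence_bound:
  assumes "finite N" "Deg N D G"
  shows "(\<Sum>i\<in>N. \<Sum>U\<in>Pow N. (G (insert i U) - G (U - {i}))^2) \<le> 4 * D * (\<Sum>U\<in>Pow N. (G U)^2)"
proof -
  let ?x = "\<lambda>S. (fc N G S)^2"
  have "(\<Sum>i\<in>N. \<Sum>U\<in>Pow N. (G (insert i U) - G (U - {i}))^2)
        = (\<Sum>i\<in>N. 4 * (\<Sum>S\<in>Pow N. (if i \<in> S then ?x S else 0)) / 2 ^ card N)"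
    using deriv_energy[OF assms(1)] by simp
  also have "\<dots> = 4 * (\<Sum>i\<in>N. \<Sum>S\<in>Pow N. (if i \<in> S then ?x S else 0)) / 2 ^ card N"
    by (simp add: sum_distrib_left sum_divide_distrib)
  also have "(\<Sum>i\<in>N. \<Sum>S\<in>Pow N. (if i \<in> S then ?x S else 0)) = (\<Sum>S\<in>Pow N. real (card S) * ?x S)"
  proof -
    have "(\<Sum>i\<in>N. \<Sum>S\<in>Pow N. (if i \<in> S then ?x S else 0)) = (\<Sum>S\<in>Pow N. \<Sum>i\<in>N. (if i \<in> S then ?x S else 0))"
      by (rule sum.swap)
    also have "\<dots> = (\<Sum>S\<in>Pow N. real (card S) * ?x S)"
    proof (intro sum.cong refl)
      fix S assume "S \<in> Pow N"
      then have "N \<inter> S = S" by auto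
      then show "(\<Sum>i\<in>N. (if i \<in> S then ?x S else 0)) = real (card S) * ?x S"
        using assms(1) by (simp add: sum.If_cases)
    qed
    finally show ?thesis .
  qed
  also have "(\<Sum>S\<in>Pow N. real (card S) * ?x S) \<le> (\<Sum>S\<in>Pow N. real D * ?x S)"
  proof (rule sum_mono)
    fix S assume S: "S \<in> Pow N"
    show "real (card S) * ?x S \<le> real D * ?x S"
    proof (cases "card S > D")
      case True then show ?thesis using fc_Deg_zero[OF assms(1,2)] S by simp
    next
      case False then show ?thesis by (intro mult_right_mono) auto
    qed
  qed
  also have "(\<Sum>S\<in>Pow N. real D * ?x S) = real D * 2 ^ card N * (\<Sum>U\<in>Pow N. (G U)^2)"
    by (simp add: sum_distrib_left[symmetric] parseval[OF assms(1)])
  finally show ?thesis by (simp add: divide_right_mono)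
qed

lemma Deg_cong: "Deg N D G \<Longrightarrow> (\<And>U. U \<subseteq> N \<Longrightarrow> G U = G' U) \<Longrightarrow> Deg N D G'"
  unfolding Deg_def by auto

lemma Deg_le: "Deg N D G \<Longrightarrow> D \<le> D' \<Longrightarrow> Deg N D' G"
  unfolding Deg_def by (meson order_trans)

lemma Deg_monom:
  assumes "finite N" "Q \<subseteq> N" "card Q \<le> D"
  shows "Deg N D (\<lambda>U. a * (if Q \<subseteq> U then 1 else 0))"
  unfolding Deg_def
proof (intro exI[of _ "\<lambda>R. if R = Q then a else 0"] conjI ballI allI impI)
  fix R assume "(if R = Q then a else 0) \<noteq> 0" then show "card R \<le> D" using assms by (auto split: if_splits)
next
  fix U assume "U \<in> Pow N"
  show "a * (if Q \<subseteq> U then 1 else 0) = (\<Sum>R\<in>Pow N. (if R = Q then a else 0) * (if R \<subseteq> U then 1 else 0))"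
    using assms by (simp add: if_distrib[of "\<lambda>x. x * _"] sum.delta' cong: if_cong)
qed

lemma Deg_zero: "Deg N D (\<lambda>U. 0)"
  unfolding Deg_def by (intro exI[of _ "\<lambda>R. 0"]) simp

lemma Deg_const: "finite N \<Longrightarrow> Deg N D (\<lambda>U. a)"
  using Deg_monom[of N "{}" D a] by simp

lemma Deg_add:
  assumes "Deg N D G" "Deg N D H"
  shows "Deg N D (\<lambda>U. G U + H U)"
proof -
  obtain p where p: "\<forall>R. p R \<noteq> 0 \<longrightarrow> card R \<le> D"
     "\<forall>U\<in>Pow N. G U = (\<Sum>R\<in>Pow N. p R * (if R \<subseteq> U then 1 else 0))"
    using assms(1) unfolding Deg_def by blast
  obtain q where q: "\<forall>R. q R \<noteq> 0 \<longrightarrow> card R \<le> D"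
     "\<forall>U\<in>Pow N. H U = (\<Sum>R\<in>Pow N. q R * (if R \<subseteq> U then 1 else 0))"
    using assms(2) unfolding Deg_def by blast
  show ?thesis unfolding Deg_def
    apply (intro exI[of _ "\<lambda>R. p R + q R"] conjI allI impI ballI)
    using p q apply (metis add.right_neutral)
    using p q by (simp add: distrib_right sum.distrib)
qed

lemma Deg_scale:
  assumes "Deg N D G"
  shows "Deg N D (\<lambda>U. a * G U)"
proof -
  obtain p where p: "\<forall>R. p R \<noteq> 0 \<longrightarrow> card R \<le> D"
     "\<forall>U\<in>Pow N. G U = (\<Sum>R\<in>Pow N. p R * (if R \<subseteq> U then 1 else 0))"
    using assms(1) unfolding Deg_def by blast
  show ?thesis unfolding Deg_def
    apply (intro exI[of _ "\<lambda>R. a * p R"] conjI allI impI ballI)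
    using p apply simp
    using p by (simp add: sum_distrib_left mult_ac)
qed

lemma Deg_sum:
  assumes "finite I" "\<And>j. j \<in> I \<Longrightarrow> Deg N D (h j)"
  shows "Deg N D (\<lambda>U. \<Sum>j\<in>I. h j U)"
  using assms
proof (induction I rule: finite_induct)
  case empty then show ?case by (simp add: Deg_zero)
next
  case (insert x F)
  then show ?case by (simp add: Deg_add)
qed

lemma Deg_mult:
  assumes "finite N" "Deg N a G" "Deg N b H"
  shows "Deg N (a + b) (\<lambda>U. G U * H U)"
proof -
  obtain p where p: "\<forall>R. p R \<noteq> 0 \<longrightarrow> card R \<le> a"
     "\<forall>U\<in>Pow N. G U = (\<Sum>R\<in>Pow N. p R * (if R \<subseteq> U then 1 else 0))"
    using assms(2) unfolding Deg_def by blast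
  obtain q where q: "\<forall>R. q R \<noteq> 0 \<longrightarrow> card R \<le> b"
     "\<forall>U\<in>Pow N. H U = (\<Sum>R\<in>Pow N. q R * (if R \<subseteq> U then 1 else 0))"
    using assms(3) unfolding Deg_def by blast
  have "Deg N (a + b) (\<lambda>U. \<Sum>R\<in>Pow N. \<Sum>R'\<in>Pow N. (p R * q R') * (if R \<union> R' \<subseteq> U then 1 else 0))"
  proof (intro Deg_sum finite_Pow_iff[THEN iffD2] assms(1))
    fix R R' assume R: "R \<in> Pow N" and R': "R' \<in> Pow N"
    show "Deg N (a + b) (\<lambda>U. (p R * q R') * (if R \<union> R' \<subseteq> U then 1 else 0))"
    proof (cases "p R * q R' = 0")
      case True then show ?thesis by (intro Deg_cong[OF Deg_zero]) simp
    next
      case False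
      then have "card R \<le> a" "card R' \<le> b" using p q by auto
      then have "card (R \<union> R') \<le> a + b" using card_Un_le[of R R'] by linarith
      then show ?thesis using R R' assms(1) by (intro Deg_monom) auto
    qed
  qed
  then show ?thesis
  proof (rule Deg_cong)
    fix U assume "U \<subseteq> N"
    then have "G U * H U = (\<Sum>R\<in>Pow N. p R * (if R \<subseteq> U then 1 else 0)) * (\<Sum>R'\<in>Pow N. q R' * (if R' \<subseteq> U then 1 else 0))"
      using p q by simp
    also have "\<dots> = (\<Sum>R\<in>Pow N. \<Sum>R'\<in>Pow N. (p R * (if R \<subseteq> U then 1 else 0)) * (q R' * (if R' \<subseteq> U then 1 else 0)))"
      by (rule sum_product)
    also have "\<dots> = (\<Sum>R\<in>Pow N. \<Sum>R'\<in>Pow N. (p R * q R') * (if R \<union> R' \<subseteq> U then 1 else 0))"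
      by (intro sum.cong refl) auto
    finally show "(\<Sum>R\<in>Pow N. \<Sum>R'\<in>Pow N. (p R * q R') * (if R \<union> R' \<subseteq> U then 1 else 0)) = G U * H U" by simp
  qed
qed

lemma Deg_prod:
  assumes "finite N" "finite W" "\<And>w. w \<in> W \<Longrightarrow> Deg N a (h w)"
  shows "Deg N (a * card W) (\<lambda>U. \<Prod>w\<in>W. h w U)"
  using assms(2,3)
proof (induction W rule: finite_induct)
  case empty then show ?case by (simp add: Deg_const assms(1))
next
  case (insert x F)
  have "Deg N (a + a * card F) (\<lambda>U. h x U * (\<Prod>w\<in>F. h w U))"
    using insert by (intro Deg_mult assms(1)) auto
  then show ?case using insert by simp
qed

definition FF :: "nat set \<Rightarrow> (nat set \<Rightarrow> real) \<Rightarrow> real \<Rightarrow> real \<Rightarrow> nat set \<Rightarrow> real" where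
  "FF N c a b U = (\<Sum>S\<in>Pow N. c S * (\<Prod>j\<in>S. (if j \<in> U then b else a)))"

lemma Deg_FF:
  assumes "finite N" "\<And>S. c S \<noteq> 0 \<Longrightarrow> card S \<le> d"
  shows "Deg N d (FF N c a b)"
  unfolding FF_def
proof (intro Deg_sum finite_Pow_iff[THEN iffD2] assms(1))
  fix S assume S: "S \<in> Pow N"
  show "Deg N d (\<lambda>U. c S * (\<Prod>j\<in>S. (if j \<in> U then b else a)))"
  proof (cases "c S = 0")
    case True then show ?thesis by (intro Deg_cong[OF Deg_zero]) simp
  next
    case False
    have fS: "finite S" using S assms(1) finite_subset by auto
    have "Deg N (1 * card S) (\<lambda>U. \<Prod>j\<in>S. (if j \<in> U then b else a))"
    proof (intro Deg_prod assms(1) fS)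
      fix j assume j: "j \<in> S"
      have "Deg N 1 (\<lambda>U. a + (b - a) * (if {j} \<subseteq> U then 1 else 0))"
        using j S assms(1) by (intro Deg_add Deg_const Deg_monom) auto
      then show "Deg N 1 (\<lambda>U. if j \<in> U then b else a)"
        by (rule Deg_cong) auto
    qed
    then have "Deg N d (\<lambda>U. \<Prod>j\<in>S. (if j \<in> U then b else a))"
      using assms(2)[OF False] by (auto intro: Deg_le)
    then show ?thesis by (rule Deg_scale)
  qed
qed

lemma prod_if_zero:
  assumes "finite S0"
  shows "(\<Prod>j\<in>S0. (if j \<in> S then (x::real) else 0)) = (if S0 \<subseteq> S then x ^ card S0 else 0)"
proof (cases "S0 \<subseteq> S")
  case True then show ?thesis by (simp add: subset_iff)
next
  case False
  then obtain j where "j \<in> S0" "j \<notin> S" by blast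
  then show ?thesis using False assms by (intro trans[OF prod_zero]) auto
qed

lemma alt_identity:
  fixes a b :: real
  assumes "finite S0" "finite S" "Z \<inter> S0 = {}"
  shows "(\<Sum>Y\<in>Pow S0. (-1) ^ card (S0 - Y) * (\<Prod>j\<in>S. (if j \<in> Y \<union> Z then b else a)))
    = (if S0 \<subseteq> S then (b - a) ^ card S0 * (\<Prod>j\<in>S - S0. (if j \<in> Z then b else a)) else 0)"
proof -
  define f1 where "f1 j = (if j \<in> S then b else 1)" for j
  define f2 where "f2 j = (if j \<in> S then - a else - 1)" for j
  define C where "C = (\<Prod>j\<in>S - S0. (if j \<in> Z then b else a))"
  have key: "(-1) ^ card (S0 - Y) * (\<Prod>j\<in>S. (if j \<in> Y \<union> Z then b else a))
        = ((\<Prod>j\<in>Y. f1 j) * (\<Prod>j\<in>S0 - Y. f2 j)) * C" if Y: "Y \<subseteq> S0" for Y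
  proof -
    have fY: "finite Y" using Y assms(1) finite_subset by auto
    have "(\<Prod>j\<in>S. (if j \<in> Y \<union> Z then b else a))
         = (\<Prod>j\<in>S \<inter> S0. (if j \<in> Y \<union> Z then b else a)) * (\<Prod>j\<in>S - S0. (if j \<in> Y \<union> Z then b else a))"
      by (rule prod.Int_Diff[OF assms(2)])
    also have "(\<Prod>j\<in>S - S0. (if j \<in> Y \<union> Z then b else a)) = C"
      unfolding C_def using Y by (intro prod.cong refl) auto
    also have "(\<Prod>j\<in>S \<inter> S0. (if j \<in> Y \<union> Z then b else a)) = (\<Prod>j\<in>S0. (if j \<in> S then (if j \<in> Y then b else a) else 1))"
    proof -
      have "(\<Prod>j\<in>S \<inter> S0. (if j \<in> Y \<union> Z then b else a)) = (\<Prod>j\<in>S0 \<inter> S. (if j \<in> Y then b else a))"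
        using assms(3) by (subst Int_commute) (intro prod.cong refl, auto)
      also have "\<dots> = (\<Prod>j\<in>S0. (if j \<in> S then (if j \<in> Y then b else a) else 1))"
        using assms(1) by (simp add: prod.inter_restrict)
      finally show ?thesis .
    qed
    also have "(\<Prod>j\<in>S0. (if j \<in> S then (if j \<in> Y then b else a) else 1))
        = (\<Prod>j\<in>Y. (if j \<in> S then (if j \<in> Y then b else a) else 1)) * (\<Prod>j\<in>S0 - Y. (if j \<in> S then (if j \<in> Y then b else a) else 1))"
      using prod.subset_diff[OF Y assms(1)] by (simp add: mult.commute)
    also have "(\<Prod>j\<in>Y. (if j \<in> S then (if j \<in> Y then b else a) else 1)) = (\<Prod>j\<in>Y. f1 j)"
      unfolding f1_def by (intro prod.cong refl) auto
    also have "(\<Prod>j\<in>S0 - Y. (if j \<in> S then (if j \<in> Y then b else a) else 1)) = (\<Prod>j\<in>S0 - Y. (if j \<in> S then a else 1))"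
      by (intro prod.cong refl) auto
    moreover have "(-1) ^ card (S0 - Y) * (\<Prod>j\<in>S0 - Y. (if j \<in> S then a else 1)) = (\<Prod>j\<in>S0 - Y. f2 j)"
    proof -
      have "(-1::real) ^ card (S0 - Y) * (\<Prod>j\<in>S0 - Y. (if j \<in> S then a else 1)) = (\<Prod>j\<in>S0 - Y. -1) * (\<Prod>j\<in>S0 - Y. (if j \<in> S then a else 1))" by simp
      also have "\<dots> = (\<Prod>j\<in>S0 - Y. (-1) * (if j \<in> S then a else 1))" by (rule prod.distrib[symmetric])
      also have "\<dots> = (\<Prod>j\<in>S0 - Y. f2 j)" unfolding f2_def by (intro prod.cong refl) auto
      finally show ?thesis .
    qed
    ultimately show ?thesis by (simp add: mult_ac)
  qed
  have "(\<Sum>Y\<in>Pow S0. (-1) ^ card (S0 - Y) * (\<Prod>j\<in>S. (if j \<in> Y \<union> Z then b else a)))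
       = (\<Sum>Y\<in>Pow S0. ((\<Prod>j\<in>Y. f1 j) * (\<Prod>j\<in>S0 - Y. f2 j)) * C)"
    using key by (intro sum.cong refl) auto
  also have "\<dots> = (\<Prod>j\<in>S0. f1 j + f2 j) * C"
    by (simp add: prod_add[OF assms(1)] sum_distrib_right)
  also have "(\<Prod>j\<in>S0. f1 j + f2 j) = (\<Prod>j\<in>S0. (if j \<in> S then b - a else 0))"
    unfolding f1_def f2_def by (intro prod.cong refl) auto
  also have "\<dots> = (if S0 \<subseteq> S then (b - a) ^ card S0 else 0)"
    by (rule prod_if_zero[OF assms(1)])
  finally show ?thesis by (simp add: C_def)
qed

lemma alt_sum_FF:
  fixes a b :: real
  assumes "finite N" "S0 \<subseteq> N" "Z \<inter> S0 = {}"
    and max: "\<And>S. c S \<noteq> 0 \<Longrightarrow> S0 \<subseteq> S \<Longrightarrow> S \<subseteq> N \<Longrightarrow> S = S0"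
  shows "(\<Sum>Y\<in>Pow S0. (-1) ^ card (S0 - Y) * FF N c a b (Y \<union> Z)) = c S0 * (b - a) ^ card S0"
proof -
  have fS0: "finite S0" by (rule finite_subset[OF assms(2,1)])
  have "(\<Sum>Y\<in>Pow S0. (-1) ^ card (S0 - Y) * FF N c a b (Y \<union> Z))
      = (\<Sum>Y\<in>Pow S0. \<Sum>S\<in>Pow N. c S * ((-1) ^ card (S0 - Y) * (\<Prod>j\<in>S. (if j \<in> Y \<union> Z then b else a))))"
    unfolding FF_def by (intro sum.cong refl) (simp add: sum_distrib_left mult_ac)
  also have "\<dots> = (\<Sum>S\<in>Pow N. c S * (\<Sum>Y\<in>Pow S0. (-1) ^ card (S0 - Y) * (\<Prod>j\<in>S. (if j \<in> Y \<union> Z then b else a))))"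
    by (subst sum.swap) (simp add: sum_distrib_left)
  also have "\<dots> = (\<Sum>S\<in>Pow N. c S * (if S0 \<subseteq> S then (b - a) ^ card S0 * (\<Prod>j\<in>S - S0. (if j \<in> Z then b else a)) else 0))"
    using assms(1) fS0 assms(3) by (intro sum.cong refl, subst alt_identity) (auto intro: finite_subset)
  also have "\<dots> = (\<Sum>S\<in>Pow N. (if S = S0 then c S0 * (b - a) ^ card S0 else 0))"
  proof (intro sum.cong refl)
    fix S assume "S \<in> Pow N"
    then show "c S * (if S0 \<subseteq> S then (b - a) ^ card S0 * (\<Prod>j\<in>S - S0. (if j \<in> Z then b else a)) else 0)
       = (if S = S0 then c S0 * (b - a) ^ card S0 else 0)"
      using max[of S] by (cases "S = S0") auto
  qed
  also have "\<dots> = c S0 * (b - a) ^ card S0"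
    using assms(1,2) by (simp add: sum.delta')
  finally show ?thesis .
qed

lemma sign_flip:
  assumes "i \<in> S0" "Y \<subseteq> S0" "finite S0"
  shows "((-1::real) ^ card (S0 - flip i Y)) = - ((-1) ^ card (S0 - Y))"
proof (cases "i \<in> Y")
  case True
  have "S0 - flip i Y = insert i (S0 - Y)" using True assms by (auto simp: flip_def)
  moreover have "i \<notin> S0 - Y" using True by auto
  ultimately show ?thesis using assms by simp
next
  case False
  have "S0 - Y = insert i (S0 - flip i Y)" using False assms by (auto simp: flip_def)
  moreover have "i \<notin> S0 - flip i Y" using False by (auto simp: flip_def)
  ultimately show ?thesis using assms by simp
qed

lemma change_count:
  fixes a b :: real
  assumes "finite N" "S0 \<subseteq> N" "i \<in> S0" "c S0 \<noteq> 0" "a \<noteq> b"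
    and max: "\<And>S. c S \<noteq> 0 \<Longrightarrow> S0 \<subseteq> S \<Longrightarrow> S \<subseteq> N \<Longrightarrow> S = S0"
  shows "2 ^ (card N - card S0) \<le> card {U\<in>Pow N. FF N c a b (insert i U) \<noteq> FF N c a b (U - {i})}"
proof -
  let ?F = "FF N c a b"
  let ?P = "\<lambda>Z Y. Y \<in> Pow S0 \<and> ?F (insert i (Y \<union> Z)) \<noteq> ?F ((Y \<union> Z) - {i})"
  have fS0: "finite S0" using assms finite_subset by auto
  have ex: "\<exists>Y. ?P Z Y" if Z: "Z \<in> Pow (N - S0)" for Z
  proof (rule ccontr)
    assume "\<not> (\<exists>Y. ?P Z Y)"
    then have eq: "\<And>Y. Y \<subseteq> S0 \<Longrightarrow> ?F (insert i (Y \<union> Z)) = ?F ((Y \<union> Z) - {i})" by auto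
    have iZ: "i \<notin> Z" using Z assms(3) by auto
    have "(\<Sum>Y\<in>Pow S0. (-1) ^ card (S0 - Y) * ?F (Y \<union> Z)) = 0"
    proof (rule sum_flip_zero[OF assms(3)])
      fix Y assume Y: "Y \<subseteq> S0"
      have "?F (flip i Y \<union> Z) = ?F (Y \<union> Z)"
      proof (cases "i \<in> Y")
        case True
        have "flip i Y \<union> Z = (Y \<union> Z) - {i}" "Y \<union> Z = insert i (Y \<union> Z)" using True iZ by (auto simp: flip_def)
        then show ?thesis using eq[OF Y] by simp
      next
        case False
        have "flip i Y \<union> Z = insert i (Y \<union> Z)" "Y \<union> Z = (Y \<union> Z) - {i}" using False iZ by (auto simp: flip_def)
        then show ?thesis using eq[OF Y] by simp
      qed
      then show "(-1) ^ card (S0 - flip i Y) * ?F (flip i Y \<union> Z) = - ((-1) ^ card (S0 - Y) * ?F (Y \<union> Z))"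
        using sign_flip[OF assms(3) Y fS0] by simp
    qed
    moreover have "(\<Sum>Y\<in>Pow S0. (-1) ^ card (S0 - Y) * ?F (Y \<union> Z)) = c S0 * (b - a) ^ card S0"
      using Z by (intro alt_sum_FF assms(1,2) max) auto
    ultimately show False using assms(4,5) by simp
  qed
  define sel where "sel Z = (SOME Y. ?P Z Y)" for Z
  have sel: "?P Z (sel Z)" if "Z \<in> Pow (N - S0)" for Z
    unfolding sel_def using ex[OF that] by (rule someI_ex)
  have inj: "inj_on (\<lambda>Z. sel Z \<union> Z) (Pow (N - S0))"
  proof (rule inj_onI)
    fix Z Z' assume Z: "Z \<in> Pow (N - S0)" and Z': "Z' \<in> Pow (N - S0)" and e: "sel Z \<union> Z = sel Z' \<union> Z'"
    have "Z = (sel Z \<union> Z) - S0" using Z sel[OF Z] by auto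
    also have "\<dots> = (sel Z' \<union> Z') - S0" using e by simp
    also have "\<dots> = Z'" using Z' sel[OF Z'] by auto
    finally show "Z = Z'" .
  qed
  have img: "(\<lambda>Z. sel Z \<union> Z) ` Pow (N - S0) \<subseteq> {U\<in>Pow N. ?F (insert i U) \<noteq> ?F (U - {i})}"
    using sel assms(2) by auto
  have "card (Pow (N - S0)) \<le> card {U\<in>Pow N. ?F (insert i U) \<noteq> ?F (U - {i})}"
    by (rule card_inj_on_le[OF inj img]) (use assms(1) in auto)
  moreover have "card (Pow (N - S0)) = 2 ^ (card N - card S0)"
    using assms(1,2) fS0 by (simp add: card_Pow card_Diff_subset)
  ultimately show ?thesis by simp
qed

lemma card_small_subsets:
  assumes "finite V"
  shows "card {S. S \<subseteq> V \<and> card S \<le> d} \<le> (card V + 1) ^ d"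
proof (induction d)
  case 0
  have h0: "{S. S \<subseteq> V \<and> card S \<le> 0} = {{}}"
  proof (intro equalityI subsetI)
    fix S assume "S \<in> {S. S \<subseteq> V \<and> card S \<le> 0}"
    then have SV: "S \<subseteq> V" and "card S \<le> 0" by auto
    then have "finite S" "card S = 0" using finite_subset[OF SV assms] by auto
    then show "S \<in> {{}}" by simp
  qed simp
  show ?case unfolding h0 by simp
next
  case (Suc d)
  let ?A = "{S. S \<subseteq> V \<and> card S \<le> d}"
  have fA: "finite ?A" by (rule finite_subset[of _ "Pow V"]) (use assms in auto)
  have sub: "{S. S \<subseteq> V \<and> card S \<le> Suc d} \<subseteq> ?A \<union> (\<Union>v\<in>V. insert v ` ?A)"
  proof
    fix S assume S: "S \<in> {S. S \<subseteq> V \<and> card S \<le> Suc d}"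
    then have SV: "S \<subseteq> V" and cS0: "card S \<le> Suc d" by auto
    have fS: "finite S" by (rule finite_subset[OF SV assms])
    show "S \<in> ?A \<union> (\<Union>v\<in>V. insert v ` ?A)"
    proof (cases "card S \<le> d")
      case True then show ?thesis using SV by blast
    next
      case False
      then have cS: "card S = Suc d" using cS0 by linarith
      then have "S \<noteq> {}" by auto
      then obtain v where v: "v \<in> S" by blast
      have "S = insert v (S - {v})" using v by blast
      moreover have "S - {v} \<in> ?A"
      proof -
        have "card (S - {v}) = d" using cS v fS by simp
        then show ?thesis using SV by blast
      qed
      moreover have "v \<in> V" using v SV by blast
      ultimately show ?thesis by blast
    qed
  qed
  define A where "A = ?A"
  have fA': "finite A" using fA by (simp only: A_def)
  have IH: "card A \<le> (card V + 1) ^ d" using Suc.IH by (simp only: A_def)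
  have sub': "{S. S \<subseteq> V \<and> card S \<le> Suc d} \<subseteq> A \<union> (\<Union>v\<in>V. insert v ` A)" using sub by (simp only: A_def)
  have fU: "finite (A \<union> (\<Union>v\<in>V. insert v ` A))" using fA' assms by blast
  have "card {S. S \<subseteq> V \<and> card S \<le> Suc d} \<le> card (A \<union> (\<Union>v\<in>V. insert v ` A))"
    by (rule card_mono[OF fU sub'])
  also have "\<dots> \<le> card A + card (\<Union>v\<in>V. insert v ` A)" by (rule card_Un_le)
  also have "card A + card (\<Union>v\<in>V. insert v ` A) \<le> card A + card V * card A"
  proof -
    have "card (\<Union>v\<in>V. insert v ` A) \<le> (\<Sum>v\<in>V. card (insert v ` A))" by (rule card_UN_le[OF assms])
    also have "\<dots> \<le> (\<Sum>v\<in>V. card A)" by (intro sum_mono card_image_le fA')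
    also have "\<dots> = card V * card A" by simp
    finally show ?thesis by simp
  qed
  also have "card A + card V * card A = (card V + 1) * card A" by simp
  also have "\<dots> \<le> (card V + 1) * (card V + 1) ^ d" by (rule mult_le_mono2[OF IH])
  also have "\<dots> = (card V + 1) ^ Suc d" by (rule power_Suc[symmetric])
  finally show ?case .
qed

lemma card_as_sum: "finite A \<Longrightarrow> real (card {x\<in>A. P x}) = (\<Sum>x\<in>A. if P x then 1 else 0)"
  by (simp add: sum.inter_filter[symmetric])

lemma core:
  fixes a b :: real
  assumes fN: "finite N" and ab: "a \<noteq> b"
    and cS: "\<And>S. c S \<noteq> 0 \<Longrightarrow> S \<subseteq> N \<and> card S \<le> d"
  shows "card (\<Union>{S. c S \<noteq> 0}) \<le> 4 * (d * (card (FF N c a b ` Pow N) - 1)) * 2 ^ d"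
proof -
  define F where "F = FF N c a b"
  define vals where "vals = F ` Pow N"
  define k where "k = card vals"
  define D where "D = d * (k - 1)"
  define V where "V = \<Union>{S. c S \<noteq> 0}"
  define g where "g v U = (if F U = v then 1 else (0::real))" for v U
  define n where "n = card N"
  have fvals: "finite vals" using fN by (simp add: vals_def)
  have VN: "V \<subseteq> N" using cS by (auto simp: V_def)
  have fV: "finite V" using finite_subset[OF VN fN] .
  have DegF: "Deg N d F" unfolding F_def using cS by (intro Deg_FF fN) auto
  have Degg: "Deg N D (g v)" if v: "v \<in> vals" for v
  proof -
    have "Deg N (d * card (vals - {v})) (\<lambda>U. \<Prod>w\<in>vals - {v}. (F U - w) / (v - w))"
    proof (intro Deg_prod fN finite_Diff fvals)
      fix w assume w: "w \<in> vals - {v}"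
      have "Deg N d (\<lambda>U. (1 / (v - w)) * F U + (- w / (v - w)))"
        by (intro Deg_add Deg_scale DegF Deg_const fN)
      then show "Deg N d (\<lambda>U. (F U - w) / (v - w))"
        by (rule Deg_cong) (simp add: diff_divide_distrib)
    qed
    moreover have "card (vals - {v}) = k - 1" using v fvals by (simp add: k_def)
    ultimately have "Deg N D (\<lambda>U. \<Prod>w\<in>vals - {v}. (F U - w) / (v - w))" by (simp add: D_def)
    then show ?thesis
    proof (rule Deg_cong)
      fix U assume U: "U \<subseteq> N"
      show "(\<Prod>w\<in>vals - {v}. (F U - w) / (v - w)) = g v U"
      proof (cases "F U = v")
        case True
        have "(\<Prod>w\<in>vals - {v}. (F U - w) / (v - w)) = 1" using True by (intro prod.neutral) auto
        then show ?thesis using True by (simp add: g_def)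
      next
        case False
        then have "F U \<in> vals - {v}" using U by (auto simp: vals_def)
        then have "(\<Prod>w\<in>vals - {v}. (F U - w) / (v - w)) = 0" using fvals by (intro prod_zero) auto
        then show ?thesis using False by (simp add: g_def)
      qed
    qed
  qed
  define Ch where "Ch i = card {U\<in>Pow N. F (insert i U) \<noteq> F (U - {i})}" for i
  have lower: "2 ^ (n - d) \<le> Ch i" if i: "i \<in> V" for i
  proof -
    let ?A = "{S. c S \<noteq> 0 \<and> i \<in> S}"
    have "finite ?A" by (rule finite_subset[of _ "Pow N"]) (use fN cS in auto)
    moreover have "?A \<noteq> {}" using i by (auto simp: V_def)
    ultimately have "\<exists>m\<in>?A. \<forall>b\<in>?A. m \<le> b \<longrightarrow> m = b" by (rule finite_has_maximal)
    then obtain S0 where S0: "S0 \<in> ?A" and mx: "\<And>S. S \<in> ?A \<Longrightarrow> S0 \<le> S \<Longrightarrow> S0 = S"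
      by blast
    have "2 ^ (card N - card S0) \<le> Ch i"
      unfolding Ch_def F_def
    proof (rule change_count[OF fN])
      show "S0 \<subseteq> N" using S0 cS by blast
      show "i \<in> S0" "c S0 \<noteq> 0" using S0 by auto
      show "a \<noteq> b" by (rule ab)
      fix S assume "c S \<noteq> 0" "S0 \<subseteq> S" "S \<subseteq> N"
      then show "S = S0" using mx[of S] S0 by auto
    qed
    moreover have "(2::nat) ^ (n - d) \<le> 2 ^ (card N - card S0)"
    proof (rule power_increasing)
      have "card S0 \<le> d" using cS S0 by blast
      then show "n - d \<le> card N - card S0" unfolding n_def by linarith
    qed simp
    ultimately show ?thesis by linarith
  qed
  have step2: "real (Ch i) \<le> (\<Sum>U\<in>Pow N. \<Sum>v\<in>vals. (g v (insert i U) - g v (U - {i}))^2)" for i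
  proof -
    have "real (Ch i) = (\<Sum>U\<in>Pow N. if F (insert i U) \<noteq> F (U - {i}) then 1 else 0)"
      unfolding Ch_def using card_as_sum[OF finite_Pow_iff[THEN iffD2, OF fN], of "\<lambda>U. F (insert i U) \<noteq> F (U - {i})"] by simp
    also have "\<dots> \<le> (\<Sum>U\<in>Pow N. \<Sum>v\<in>vals. (g v (insert i U) - g v (U - {i}))^2)"
    proof (rule sum_mono)
      fix U assume U: "U \<in> Pow N"
      show "(if F (insert i U) \<noteq> F (U - {i}) then 1 else 0) \<le> (\<Sum>v\<in>vals. (g v (insert i U) - g v (U - {i}))^2)"
      proof (cases "F (insert i U) \<noteq> F (U - {i})")
        case True
        show ?thesis
        proof (cases "i \<in> N")
          case iN: True
          have mem: "F (insert i U) \<in> vals" using U iN by (auto simp: vals_def)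
          have "(g (F (insert i U)) (insert i U) - g (F (insert i U)) (U - {i}))^2 \<le> (\<Sum>v\<in>vals. (g v (insert i U) - g v (U - {i}))^2)"
            by (rule member_le_sum[OF mem]) (auto simp: fvals)
          then show ?thesis using True by (simp add: g_def)
        next
          case False
          then have "F (insert i U) = F U" "F (U - {i}) = F U"
          proof -
            have "U - {i} = U" using False U by auto
            moreover have "F (insert i U) = F U"
              unfolding F_def FF_def
            proof (intro sum.cong refl arg_cong2[where f="(*)"] prod.cong)
              fix S j assume "S \<in> Pow N" "j \<in> S"
              then show "(if j \<in> insert i U then b else a) = (if j \<in> U then b else a)" using False by auto
            qed
            ultimately show "F (insert i U) = F U" "F (U - {i}) = F U" by auto
          qed
          then show ?thesis using True by simp
        qed
      next
        case False then show ?thesis by (simp add: sum_nonneg)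
      qed
    qed
    finally show ?thesis .
  qed
  have "real (card V) * 2 ^ (n - d) = (\<Sum>i\<in>V. real (2 ^ (n - d)))" by simp
  also have "\<dots> \<le> (\<Sum>i\<in>V. real (Ch i))" using lower by (intro sum_mono) (simp only: of_nat_le_iff)
  also have "\<dots> \<le> (\<Sum>i\<in>N. real (Ch i))" using VN fN by (intro sum_mono2) auto
  also have "\<dots> \<le> (\<Sum>i\<in>N. \<Sum>U\<in>Pow N. \<Sum>v\<in>vals. (g v (insert i U) - g v (U - {i}))^2)"
    by (intro sum_mono step2)
  also have "\<dots> = (\<Sum>v\<in>vals. \<Sum>i\<in>N. \<Sum>U\<in>Pow N. (g v (insert i U) - g v (U - {i}))^2)"
    by (simp add: sum.swap[of _ vals])
  also have "\<dots> \<le> (\<Sum>v\<in>vals. 4 * D * (\<Sum>U\<in>Pow N. (g v U)^2))"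
    by (intro sum_mono influence_bound[OF fN] Degg) 
  finally have ch1: "real (card V) * 2 ^ (n - d) \<le> (\<Sum>v\<in>vals. 4 * D * (\<Sum>U\<in>Pow N. (g v U)^2))" .
  have "(\<Sum>v\<in>vals. 4 * D * (\<Sum>U\<in>Pow N. (g v U)^2)) = 4 * D * (\<Sum>U\<in>Pow N. \<Sum>v\<in>vals. (g v U)^2)"
    by (simp add: sum_distrib_left[symmetric] sum.swap[of _ vals])
  also have "(\<Sum>U\<in>Pow N. \<Sum>v\<in>vals. (g v U)^2) = (\<Sum>U\<in>Pow N. 1)"
  proof (intro sum.cong refl)
    fix U assume "U \<in> Pow N"
    then have "F U \<in> vals" by (auto simp: vals_def)
    moreover have "(\<Sum>v\<in>vals. (g v U)^2) = (\<Sum>v\<in>vals. if v = F U then 1 else 0)"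
      by (intro sum.cong refl) (auto simp: g_def)
    ultimately show "(\<Sum>v\<in>vals. (g v U)^2) = 1" using fvals by (simp add: sum.delta)
  qed
  also have "(\<Sum>U\<in>Pow N. (1::real)) = 2 ^ n" using fN by (simp add: card_Pow n_def)
  finally have ch2: "(\<Sum>v\<in>vals. 4 * D * (\<Sum>U\<in>Pow N. (g v U)^2)) = real (4 * D) * (2::real) ^ n" .
  have p2: "(2::real) ^ n \<le> 2 ^ d * 2 ^ (n - d)"
  proof -
    have "(2::real) ^ n \<le> 2 ^ (d + (n - d))" by (intro power_increasing) auto
    then show ?thesis by (simp add: power_add)
  qed
  have "real (card V) * 2 ^ (n - d) \<le> (real (4 * D) * (2::real) ^ d) * 2 ^ (n - d)"
  proof -
    have "real (4 * D) * 2 ^ n \<le> real (4 * D) * (2 ^ d * 2 ^ (n - d))"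
      by (rule mult_left_mono[OF p2]) simp
    moreover have "(real (4 * D) * (2::real) ^ d) * 2 ^ (n - d) = real (4 * D) * (2 ^ d * 2 ^ (n - d))"
      by (simp only: mult.assoc)
    ultimately show ?thesis using ch1 ch2 by linarith
  qed
  then have "real (card V) \<le> real (4 * D) * (2::real) ^ d"
    by (rule mult_right_le_imp_le) simp
  moreover have "real (4 * D * 2 ^ d) = real (4 * D) * (2::real) ^ d" by simp
  ultimately have "real (card V) \<le> real (4 * D * 2 ^ d)" by linarith
  then have "card V \<le> 4 * D * 2 ^ d" by (rule of_nat_le_iff[THEN iffD1])
  then show ?thesis by (simp only: V_def D_def k_def vals_def F_def)
qed

lemma arith_bound:
  fixes d k K m T :: nat
  assumes d: "d \<ge> 1" and k: "1 \<le> k" "k \<le> K" and m: "m \<le> 4 * (d * (k - 1)) * 2 ^ d"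
    and T: "T \<le> (m + 1) ^ d"
  shows "T \<le> 2 ^ (2 * d * d * (K + 3))"
proof -
  obtain k' where k': "k = Suc k'" using k by (cases k) auto
  have "m + 1 \<le> 4 * (d * k') * 2 ^ d + 4 * d * 2 ^ d"
  proof -
    have h: "1 \<le> 4 * d * 2 ^ d" using d by simp
    have m': "m \<le> 4 * (d * k') * 2 ^ d" using m k' by simp
    show ?thesis using h m' by linarith
  qed
  also have "\<dots> = 4 * d * k * 2 ^ d" using k' by (simp add: algebra_simps)
  also have "\<dots> \<le> 4 * 2 ^ d * 2 ^ k * 2 ^ d"
  proof -
    have "d \<le> 2 ^ d" "k \<le> 2 ^ k" using less_exp[of d] less_exp[of k] by auto
    then have "d * k \<le> 2 ^ d * 2 ^ k" by (rule mult_le_mono)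
    then show ?thesis by simp
  qed
  also have "\<dots> = 2 ^ d * 2 ^ d * 2 ^ k * 2 ^ 2" by (simp add: mult_ac)
  also have "\<dots> = 2 ^ (d + d + k + 2)" by (simp only: power_add)
  also have "d + d + k + 2 = 2 * d + k + 2" by simp
  finally have m1: "m + 1 \<le> 2 ^ (2 * d + k + 2)" .
  have "T \<le> (2 ^ (2 * d + k + 2)) ^ d" using T power_mono[OF m1, of d] by linarith
  also have "\<dots> = 2 ^ ((2 * d + k + 2) * d)" by (simp only: power_mult)
  also have "\<dots> \<le> 2 ^ (2 * d * d * (K + 3))"
  proof (rule power_increasing)
    have e1: "(2 * d + k + 2) * d = 2 * d * d + k * d + 2 * d" by (simp add: algebra_simps)
    have "k * d \<le> K * d" using k by simp
    also have "K * d \<le> K * (2 * d * d)" using d by (intro mult_le_mono2) simp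
    finally have e2: "k * d \<le> 2 * d * d * K" by (simp add: mult_ac)
    have e3: "2 * d \<le> 4 * d * d" using d by simp
    have e4: "2 * d * d * (K + 3) = 2 * d * d * K + 6 * d * d" by (simp add: algebra_simps)
    show "(2 * d + k + 2) * d \<le> 2 * d * d * (K + 3)" using e1 e2 e3 e4 by linarith
  qed simp
  finally show ?thesis .
qed

theorem lemma6p2:
  fixes X :: "real pmf" and n d T :: nat and c :: "nat set \<Rightarrow> real"
  assumes "finite (set_pmf X)"
    and "measure_pmf.expectation X (\<lambda>x. x) = 0"
    and "measure_pmf.variance X (\<lambda>x. x) = 1"
    and "is_multilinear_poly n d c"
    and "sparsity c = T"
  shows "real (card (set_pmf (map_pmf (mpoly_eval n c) (Pi_pmf {..<n} 0 (\<lambda>_. X)))))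
           \<ge> 1 / (2 * real d ^ 2) * log 2 (real T) - 3"
proof -
  define N where "N = {..<n}"
  have fN: "finite N" by (simp add: N_def)
  have cS: "c S \<noteq> 0 \<Longrightarrow> S \<subseteq> N \<and> card S \<le> d" for S
    using assms(4) by (auto simp: is_multilinear_poly_def N_def)
  obtain a b where ab: "a \<in> set_pmf X" "b \<in> set_pmf X" "a \<noteq> b"
  proof -
    obtain a where a: "a \<in> set_pmf X" using set_pmf_not_empty by fast
    have "\<exists>b\<in>set_pmf X. b \<noteq> a"
    proof (rule ccontr)
      assume "\<not> (\<exists>b\<in>set_pmf X. b \<noteq> a)"
      then have "set_pmf X \<subseteq> {a}" by auto
      then have "X = return_pmf a" by (simp add: set_pmf_subset_singleton)
      then show False using assms(3) by simp
    qed
    then show ?thesis using that a by blast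
  qed
  define Y where "Y = set_pmf (map_pmf (mpoly_eval n c) (Pi_pmf {..<n} 0 (\<lambda>_. X)))"
  have Yeq: "Y = mpoly_eval n c ` PiE_dflt {..<n} 0 (set_pmf \<circ> (\<lambda>_. X))"
    unfolding Y_def by (simp add: set_Pi_pmf)
  have fY: "finite Y" unfolding Yeq using assms(1) by (intro finite_imageI finite_PiE_dflt) auto
  define xU where "xU U i = (if i < n then (if i \<in> U then b else a) else (0::real))" for U i
  have xmem: "xU U \<in> PiE_dflt {..<n} 0 (set_pmf \<circ> (\<lambda>_. X))" for U
    using ab by (auto simp: PiE_dflt_def xU_def)
  have mp: "mpoly_eval n c (xU U) = FF N c a b U" for U
    unfolding mpoly_eval_def FF_def N_def
  proof (intro sum.cong refl arg_cong2[where f="(*)"] prod.cong)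
    fix S j assume "S \<in> Pow {..<n}" "j \<in> S"
    then show "xU U j = (if j \<in> U then b else a)" by (auto simp: xU_def)
  qed
  have sub: "FF N c a b ` Pow N \<subseteq> Y"
  proof
    fix y assume "y \<in> FF N c a b ` Pow N"
    then obtain U where "y = FF N c a b U" by blast
    then have "y = mpoly_eval n c (xU U)" by (simp add: mp)
    then show "y \<in> Y" unfolding Yeq using xmem by blast
  qed
  define k where "k = card (FF N c a b ` Pow N)"
  define K where "K = card Y"
  have kK: "k \<le> K" unfolding k_def K_def by (rule card_mono[OF fY sub])
  have k1: "1 \<le> k" unfolding k_def using fN by (auto simp: Suc_le_eq card_gt_0_iff)
  define V where "V = \<Union>{S. c S \<noteq> 0}"
  have Vb: "card V \<le> 4 * (d * (k - 1)) * 2 ^ d"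
    unfolding V_def k_def by (rule core[OF fN ab(3) cS])
  have VN: "V \<subseteq> N" using cS by (auto simp: V_def)
  have fV: "finite V" using finite_subset[OF VN fN] .
  have Tdef: "T = card {S. c S \<noteq> 0}" using assms(5) by (simp add: sparsity_def)
  show ?thesis
  proof (cases "d = 0 \<or> T = 0")
    case True
    then have h: "1 / (2 * real d ^ 2) * log 2 (real T) = 0" by (auto simp: log_def)
    have "0 \<le> real (card (set_pmf (map_pmf (mpoly_eval n c) (Pi_pmf {..<n} 0 (\<lambda>_. X)))))" by simp
    then show ?thesis using h by linarith
  next
    case False
    then have d1: "d \<ge> 1" and T1: "T \<ge> 1" by auto
    have "T \<le> card {S. S \<subseteq> V \<and> card S \<le> d}"
      unfolding Tdef
    proof (rule card_mono)
      show "finite {S. S \<subseteq> V \<and> card S \<le> d}" by (rule finite_subset[of _ "Pow V"]) (use fV in auto)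
      show "{S. c S \<noteq> 0} \<subseteq> {S. S \<subseteq> V \<and> card S \<le> d}" using cS by (auto simp: V_def)
    qed
    also have "\<dots> \<le> (card V + 1) ^ d" by (rule card_small_subsets[OF fV])
    finally have "T \<le> 2 ^ (2 * d * d * (K + 3))"
      using arith_bound[OF d1 k1 kK Vb] by blast
    then have "real T \<le> 2 ^ (2 * d * d * (K + 3))" by (metis of_nat_le_iff of_nat_numeral of_nat_power)
    then have "log 2 (real T) \<le> log 2 (2 ^ (2 * d * d * (K + 3)))"
      using T1 by (subst log_le_cancel_iff) auto
    also have "\<dots> = real (2 * d * d * (K + 3))" by (simp add: log_nat_power)
    finally have L: "log 2 (real T) \<le> 2 * real d ^ 2 * (real K + 3)" by (simp add: power2_eq_square mult_ac)
    have pos: "0 < 2 * real d ^ 2" using d1 by simp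
    have "1 / (2 * real d ^ 2) * log 2 (real T) \<le> 1 / (2 * real d ^ 2) * (2 * real d ^ 2 * (real K + 3))"
      by (rule mult_left_mono[OF L]) (use pos in simp)
    also have "\<dots> = real K + 3" using pos by simp
    finally show ?thesis by (simp add: K_def Y_def)
  qed
qed

end
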